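(* Let $\mathcal N$ be a smooth manifold, $\gamma$ a symmetric $2$-covariant tensor field, $\boldsymbol\ell$ a one-form and $\ell^{(2)}$ a function on $\mathcal N$. Then $\{\mathcal N,\gamma,\boldsymbol\ell,\ell^{(2)}\}$ is null metric hypersurface data if and only if (i) $\mathrm{Rad}(\gamma|_p)$ is one-dimensional at every $p\in\mathcal N$, and (ii) for every $p$ and every non-zero $e_1\in\mathrm{Rad}(\gamma|_p)$, $\boldsymbol\ell|_p(e_1)\neq0$.
   Context: Metric hypersurface data: $\{\mathcal N,\gamma,\boldsymbol\ell,\ell^{(2)}\}$ such that $\boldsymbol{\mathcal A}|_p((W,a),(Z,b))=\gamma(W,Z)+a\boldsymbol\ell(Z)+b\boldsymbol\ell(W)+ab\ell^{(2)}$ on $T_p\mathcal N\times\mathbb R$ is non-degenerate for all $p$. Its inverse $\mathcal A((\boldsymbol\alpha,a),(\boldsymbol\beta,b))=P(\boldsymbol\alpha,\boldsymbol\beta)+a\,n(\boldsymbol\beta)+b\,n(\boldsymbol\alpha)+ab\,n^{(2)}$ defines $P$, a vector field $n$ and a function $n^{(2)}$; the data is null if $n^{(2)}=0$ everywhere. $\mathrm{Rad}(\gamma|_p)=\{X\in T_p\mathcal N:\gamma|_p(X,\cdot)=0\}$. *)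

theory Defs
  imports "HOL-Analysis.Analysis"
begin

text \<open>Pointwise model: points of the manifold are the elements of a type 'p,
  each tangent space T_p N is modelled by a fixed finite-dimensional real
  inner-product space 'v (of dimension n = dim N).\<close>

definition bigA :: "('v \<Rightarrow> 'v \<Rightarrow> real) \<Rightarrow> ('v \<Rightarrow> real) \<Rightarrow> real
                    \<Rightarrow> 'v \<Rightarrow> real \<Rightarrow> 'v \<Rightarrow> real \<Rightarrow> real" where
  "bigA g l l2 W a Z b = g W Z + a * l Z + b * l W + a * b * l2"

definition A_nondegenerate :: "('v::real_vector \<Rightarrow> 'v \<Rightarrow> real) \<Rightarrow> ('v \<Rightarrow> real) \<Rightarrow> real \<Rightarrow> bool" where
  "A_nondegenerate g l l2 \<longleftrightarrow>
     (\<forall>W a. (\<forall>Z b. bigA g l l2 W a Z b = 0) \<longrightarrow> W = 0 \<and> a = 0)"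

text \<open>n^(2) = (inverse of A)((0,1),(0,1)): the covector theta = (0,1) acts by
  (Z,b) |-> b; with A((V,c),.) = theta we get A^{-1}(theta,theta) = theta(V,c) = c.\<close>
definition n2 :: "('v \<Rightarrow> 'v \<Rightarrow> real) \<Rightarrow> ('v \<Rightarrow> real) \<Rightarrow> real \<Rightarrow> real" where
  "n2 g l l2 = (THE c. \<exists>V. \<forall>Z b. bigA g l l2 V c Z b = b)"

definition metric_hypersurface_data ::
  "('p \<Rightarrow> 'v::real_vector \<Rightarrow> 'v \<Rightarrow> real) \<Rightarrow> ('p \<Rightarrow> 'v \<Rightarrow> real) \<Rightarrow> ('p \<Rightarrow> real) \<Rightarrow> bool" where
  "metric_hypersurface_data g l l2 \<longleftrightarrow> (\<forall>p. A_nondegenerate (g p) (l p) (l2 p))"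

definition null_metric_hypersurface_data ::
  "('p \<Rightarrow> 'v::real_vector \<Rightarrow> 'v \<Rightarrow> real) \<Rightarrow> ('p \<Rightarrow> 'v \<Rightarrow> real) \<Rightarrow> ('p \<Rightarrow> real) \<Rightarrow> bool" where
  "null_metric_hypersurface_data g l l2 \<longleftrightarrow>
     metric_hypersurface_data g l l2 \<and> (\<forall>p. n2 (g p) (l p) (l2 p) = 0)"

definition Rad :: "('v \<Rightarrow> 'v \<Rightarrow> real) \<Rightarrow> 'v set" where
  "Rad g = {X. \<forall>Y. g X Y = 0}"

end

theory Submission
  imports Defs
begin

lemma uniq_sol:
  fixes g :: "'v::euclidean_space \<Rightarrow> 'v \<Rightarrow> real"
  assumes bl: "bilinear g" and ll: "linear l" and nd: "A_nondegenerate g l l2"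
    and s1: "\<forall>Z b. bigA g l l2 V c Z b = b" and s2: "\<forall>Z b. bigA g l l2 V' c' Z b = b"
  shows "c = c'"
proof -
  have "\<forall>Z b. bigA g l l2 (V - V') (c - c') Z b = 0"
  proof (intro allI)
    fix Z b
    have e1: "g (V - V') Z = g V Z - g V' Z" using bl by (simp add: bilinear_lsub)
    have e2: "l (V - V') = l V - l V'" using ll by (simp add: linear_diff)
    show "bigA g l l2 (V - V') (c - c') Z b = 0"
      using s1[rule_format, of Z b] s2[rule_format, of Z b]
      unfolding bigA_def e1 e2 by (simp add: algebra_simps)
  qed
  then have "c - c' = 0" using nd unfolding A_nondegenerate_def by blast
  then show ?thesis by simp
qed

lemma ex_sol:
  fixes g :: "'v::euclidean_space \<Rightarrow> 'v \<Rightarrow> real"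
  assumes bl: "bilinear g" and ll: "linear l" and nd: "A_nondegenerate g l l2"
  shows "\<exists>V c. \<forall>Z b. bigA g l l2 V c Z b = b"
proof -
  define F :: "'v \<times> real \<Rightarrow> 'v \<times> real" where
    "F = (\<lambda>(W,a). ((\<Sum>i\<in>Basis. (g W i + a * l i) *\<^sub>R i), l W + a * l2))"
  have lg: "linear (\<lambda>W. g W i)" for i using bl unfolding bilinear_def by auto
  have lgr: "linear (g W)" for W using bl unfolding bilinear_def by auto
  have linF: "linear F"
  proof (rule linearI)
    fix x y :: "'v \<times> real"
    show "F (x + y) = F x + F y"
      unfolding F_def using lg ll
      by (auto simp: case_prod_beta linear_add bilinear_ladd[OF bl] algebra_simps sum.distrib scaleR_add_left)
  next
    fix r and x :: "'v \<times> real"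
    show "F (r *\<^sub>R x) = r *\<^sub>R F x"
      unfolding F_def using lg ll
      by (auto simp: case_prod_beta linear_scale bilinear_lmul[OF bl] algebra_simps scaleR_sum_right)
  qed
  have zero_all: "\<forall>Z. g W Z + a * l Z = 0"
    if h: "\<forall>i\<in>Basis. g W i + a * l i = 0" for W a
  proof
    fix Z :: 'v
    have lin: "linear (\<lambda>Z. g W Z + a * l Z)"
      using lgr ll by (intro linearI) (auto simp: linear_add linear_scale algebra_simps)
    have "g W Z + a * l Z = (\<lambda>Z. g W Z + a * l Z) (\<Sum>i\<in>Basis. (Z \<bullet> i) *\<^sub>R i)"
      by (simp add: euclidean_representation)
    also have "\<dots> = (\<Sum>i\<in>Basis. (\<lambda>Z. g W Z + a * l Z) ((Z \<bullet> i) *\<^sub>R i))"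
      by (rule linear_sum[OF lin])
    also have "\<dots> = (\<Sum>i\<in>Basis. (Z \<bullet> i) * (g W i + a * l i))"
      by (simp add: linear_scale[OF lgr] linear_scale[OF ll] algebra_simps)
    also have "\<dots> = 0" using h by simp
    finally show "g W Z + a * l Z = 0" .
  qed
  have "inj F"
    unfolding linear_injective_0[OF linF]
  proof (intro allI impI)
    fix x :: "'v \<times> real"
    assume h: "F x = 0"
    obtain W a where x: "x = (W, a)" by (cases x)
    have s0: "(\<Sum>i\<in>Basis. (g W i + a * l i) *\<^sub>R i) = 0" and t0: "l W + a * l2 = 0"
      using h unfolding F_def x by (auto simp: zero_prod_def)
    have "\<forall>i\<in>Basis. g W i + a * l i = 0"
    proof
      fix j :: 'v assume j: "j \<in> Basis"
      have "(\<Sum>i\<in>Basis. (g W i + a * l i) *\<^sub>R i) \<bullet> j = g W j + a * l j"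
        using j by (simp add: inner_sum_left inner_Basis if_distrib cong: if_cong)
      then show "g W j + a * l j = 0" using s0 by simp
    qed
    then have "\<forall>Z. g W Z + a * l Z = 0" by (rule zero_all)
    then have "\<forall>Z b. bigA g l l2 W a Z b = 0"
      using t0 unfolding bigA_def by (simp add: algebra_simps)
      (metis add.assoc distrib_left mult.commute mult_zero_right)
    then show "x = 0" using nd unfolding A_nondegenerate_def x by (auto simp: zero_prod_def)
  qed
  then have "surj F" using linF by (rule linear_inj_imp_surj[rotated])
  then obtain y where y: "F y = (0, 1)" by (metis surjD)
  obtain V c where yv: "y = (V, c)" by (cases y)
  have s0: "(\<Sum>i\<in>Basis. (g V i + c * l i) *\<^sub>R i) = 0" and t0: "l V + c * l2 = 1"
    using y unfolding F_def yv by auto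
  have "\<forall>i\<in>Basis. g V i + c * l i = 0"
  proof
    fix j :: 'v assume j: "j \<in> Basis"
    have "(\<Sum>i\<in>Basis. (g V i + c * l i) *\<^sub>R i) \<bullet> j = g V j + c * l j"
      using j by (simp add: inner_sum_left inner_Basis if_distrib cong: if_cong)
    then show "g V j + c * l j = 0" using s0 by simp
  qed
  then have z: "\<forall>Z. g V Z + c * l Z = 0" by (rule zero_all)
  have "\<forall>Z b. bigA g l l2 V c Z b = b"
  proof (intro allI)
    fix Z b
    have "bigA g l l2 V c Z b = (g V Z + c * l Z) + b * (l V + c * l2)"
      unfolding bigA_def by (simp add: algebra_simps)
    then show "bigA g l l2 V c Z b = b" using z t0 by simp
  qed
  then show ?thesis by blast
qed

lemma Rad_subspace:
  fixes g :: "'v::euclidean_space \<Rightarrow> 'v \<Rightarrow> real"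
  assumes bl: "bilinear g"
  shows "subspace (Rad g)"
  unfolding subspace_def Rad_def
  by (simp add: bilinear_lzero[OF bl] bilinear_ladd[OF bl] bilinear_lmul[OF bl])

lemma n2_eq:
  fixes g :: "'v::euclidean_space \<Rightarrow> 'v \<Rightarrow> real"
  assumes bl: "bilinear g" and ll: "linear l" and nd: "A_nondegenerate g l l2"
    and s: "\<forall>Z b. bigA g l l2 V c Z b = b"
  shows "n2 g l l2 = c"
  unfolding n2_def
proof (rule the_equality)
  show "\<exists>V. \<forall>Z b. bigA g l l2 V c Z b = b" using s by blast
next
  fix c' assume "\<exists>V. \<forall>Z b. bigA g l l2 V c' Z b = b"
  then obtain V' where "\<forall>Z b. bigA g l l2 V' c' Z b = b" by blast
  then show "c' = c" using uniq_sol[OF bl ll nd] s by blast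
qed

lemma pt:
  fixes g :: "'v::euclidean_space \<Rightarrow> 'v \<Rightarrow> real"
  assumes bl: "bilinear g" and sy: "\<And>X Y. g X Y = g Y X" and ll: "linear l"
  shows "(A_nondegenerate g l l2 \<and> n2 g l l2 = 0) \<longleftrightarrow>
    (dim (Rad g) = 1 \<and> (\<forall>e\<in>Rad g. e \<noteq> 0 \<longrightarrow> l e \<noteq> 0))"
proof
  assume h: "A_nondegenerate g l l2 \<and> n2 g l l2 = 0"
  then have nd: "A_nondegenerate g l l2" by blast
  obtain V c where s: "\<forall>Z b. bigA g l l2 V c Z b = b" using ex_sol[OF bl ll nd] by blast
  have "c = 0" using n2_eq[OF bl ll nd s] h by simp
  then have s': "\<forall>Z b. g V Z + b * l V = b" using s unfolding bigA_def by simp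
  have VR: "V \<in> Rad g" using s'[rule_format, of _ 0] unfolding Rad_def by simp
  have lV: "l V = 1" using s'[rule_format, of 0 1] bilinear_rzero[OF bl] by simp
  have ii: "\<forall>e\<in>Rad g. e \<noteq> 0 \<longrightarrow> l e \<noteq> 0"
  proof (intro ballI impI notI)
    fix e assume e: "e \<in> Rad g" "e \<noteq> 0" "l e = 0"
    have "\<forall>Z b. bigA g l l2 e 0 Z b = 0" using e unfolding bigA_def Rad_def by simp
    then show False using nd e(2) unfolding A_nondegenerate_def by blast
  qed
  have sub: "subspace (Rad g)" by (rule Rad_subspace[OF bl])
  have "Rad g = span {V}"
  proof
    show "Rad g \<subseteq> span {V}"
    proof
      fix X assume X: "X \<in> Rad g"
      have m: "X - l X *\<^sub>R V \<in> Rad g"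
        using X VR sub by (simp add: subspace_diff subspace_scale)
      have "l (X - l X *\<^sub>R V) = 0" using lV ll by (simp add: linear_diff linear_scale)
      then have "X - l X *\<^sub>R V = 0" using ii m by blast
      then have "X = l X *\<^sub>R V" by simp
      then show "X \<in> span {V}" by (metis span_base span_scale singletonI)
    qed
  next
    show "span {V} \<subseteq> Rad g" using VR sub by (simp add: span_minimal)
  qed
  moreover have "V \<noteq> 0" using lV ll linear_0 by force
  ultimately have "dim (Rad g) = 1" by (simp add: dim_span dim_singleton)
  then show "dim (Rad g) = 1 \<and> (\<forall>e\<in>Rad g. e \<noteq> 0 \<longrightarrow> l e \<noteq> 0)" using ii by blast
next
  assume h: "dim (Rad g) = 1 \<and> (\<forall>e\<in>Rad g. e \<noteq> 0 \<longrightarrow> l e \<noteq> 0)"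
  have sub: "subspace (Rad g)" by (rule Rad_subspace[OF bl])
  have "\<not> Rad g \<subseteq> {0}" using h dim_eq_0[of "Rad g"] by simp
  then obtain e where e: "e \<in> Rad g" "e \<noteq> 0" by blast
  then have le: "l e \<noteq> 0" using h by blast
  define V where "V = (1 / l e) *\<^sub>R e"
  have VR: "V \<in> Rad g" unfolding V_def using e sub by (simp add: subspace_scale)
  have lV: "l V = 1" unfolding V_def using le ll by (simp add: linear_scale)
  have gV: "g V Z = 0" for Z using VR unfolding Rad_def by simp
  have nd: "A_nondegenerate g l l2"
    unfolding A_nondegenerate_def
  proof (intro allI impI)
    fix W a assume w: "\<forall>Z b. bigA g l l2 W a Z b = 0"
    have "g W V + a * l V = 0" using w[rule_format, of V 0] unfolding bigA_def by simp
    then have a0: "a = 0" using gV[of W] sy[of W V] lV by simp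
    have WR: "W \<in> Rad g" unfolding Rad_def
    proof (intro CollectI allI)
      fix Y show "g W Y = 0" using w[rule_format, of Y 0] a0 unfolding bigA_def by simp
    qed
    have "l W = 0" using w[rule_format, of 0 1] a0 bilinear_rzero[OF bl] unfolding bigA_def by simp
    then have "W = 0" using h WR by blast
    then show "W = 0 \<and> a = 0" using a0 by simp
  qed
  have "\<forall>Z b. bigA g l l2 V 0 Z b = b" unfolding bigA_def using gV lV by simp
  then have "n2 g l l2 = 0" by (rule n2_eq[OF bl ll nd])
  then show "A_nondegenerate g l l2 \<and> n2 g l l2 = 0" using nd by blast
qed

theorem lemma3p3:
  fixes g :: "'p \<Rightarrow> 'v::euclidean_space \<Rightarrow> 'v \<Rightarrow> real"
    and l :: "'p \<Rightarrow> 'v \<Rightarrow> real"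
    and l2 :: "'p \<Rightarrow> real"
  assumes "\<And>p. bilinear (g p)"
    and "\<And>p X Y. g p X Y = g p Y X"
    and "\<And>p. linear (l p)"
  shows "null_metric_hypersurface_data g l l2 \<longleftrightarrow>
           (\<forall>p. dim (Rad (g p)) = 1) \<and>
           (\<forall>p. \<forall>e1 \<in> Rad (g p). e1 \<noteq> 0 \<longrightarrow> l p e1 \<noteq> 0)"
  unfolding null_metric_hypersurface_data_def metric_hypersurface_data_def
  using pt[OF assms(1) assms(2) assms(3)] by blast

end
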